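(* For every $\theta>0$ there exists $C>0$ such that for all $n\in\mathbb{Z}^2$, all $\mu\in\mathbb{Z}$ and all dyadic $N_1,N_2,N_3\ge1$, $$\big|\Gamma^-_\mu(n)\cap\{|n_1|\sim N_1,\ |n_3|\sim N_3\}\big|\le C N_1N_3\max(N_1,N_3)^\theta,$$ $$\big|\Gamma^-_\mu(n)\cap\{|n_1|\sim N_1,\ |n_2|\sim N_2\}\big|\le C N_1N_2\max(N_1,N_2)^\theta.$$
   Context: For $n=(j,k)\in\mathbb{Z}^2$ let $|n|_-^2=j^2-k^2$ (hyperbolic modulus). For $n\in\mathbb{Z}^2$, $\Gamma(n)=\{(n_1,n_2,n_3)\in(\mathbb{Z}^2)^3: n_1-n_2+n_3=n,\ n\ne n_1,\ n\ne n_3\}$, and for $\mu\in\mathbb{Z}$, $\Gamma^-_\mu(n)=\{(n_1,n_2,n_3)\in\Gamma(n): |n|_-^2-|n_1|_-^2+|n_2|_-^2-|n_3|_-^2=\mu\}$. For dyadic $N\ge1$, $|m|\sim N$ means $\frac12N\le|m|<2N$ if $N\ge2$, and $|m|<2$ if $N=1$ ($|\cdot|$ the Euclidean norm). *)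

theory Defs
  imports Complex_Main
begin

type_synonym pt = "int \<times> int"

definition hmod2 :: "pt \<Rightarrow> int" where
  "hmod2 m = (fst m)^2 - (snd m)^2"

definition enorm :: "pt \<Rightarrow> real" where
  "enorm m = sqrt (real_of_int ((fst m)^2 + (snd m)^2))"

definition dyadic :: "real \<Rightarrow> bool" where
  "dyadic N \<longleftrightarrow> (\<exists>k::nat. N = 2 ^ k)"

definition sim :: "pt \<Rightarrow> real \<Rightarrow> bool" where
  "sim m N = (if N \<ge> 2 then N / 2 \<le> enorm m \<and> enorm m < 2 * N else enorm m < 2)"

definition Gamma :: "pt \<Rightarrow> (pt \<times> pt \<times> pt) set" where
  "Gamma n = {(n1, n2, n3). fst n1 - fst n2 + fst n3 = fst n \<and>
      snd n1 - snd n2 + snd n3 = snd n \<and> n \<noteq> n1 \<and> n \<noteq> n3}"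

definition Gamma_minus :: "int \<Rightarrow> pt \<Rightarrow> (pt \<times> pt \<times> pt) set" where
  "Gamma_minus \<mu> n = {(n1, n2, n3) \<in> Gamma n.
      hmod2 n - hmod2 n1 + hmod2 n2 - hmod2 n3 = \<mu>}"

end

theory Submission
  imports Defs
begin
lemma prog_card:
  fixes S :: "int set" and q r :: int and lo L :: real
  assumes q: "q > 0" and L: "L \<ge> 0"
    and rng: "\<And>s. s \<in> S \<Longrightarrow> lo \<le> real_of_int s \<and> real_of_int s \<le> lo + L"
    and md: "\<And>s. s \<in> S \<Longrightarrow> q dvd (s - r)"
  shows "real (card S) \<le> L / q + 1"
proof -
  define a where "a = \<lceil>(lo - r) / q\<rceil>"
  define b where "b = \<lfloor>(lo + L - r) / q\<rfloor>"
  have sub: "S \<subseteq> (\<lambda>t. r + q * t) ` {a..b}"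
  proof
    fix s assume s: "s \<in> S"
    obtain t where t: "s - r = q * t" using md[OF s] by (auto elim: dvdE)
    have "lo \<le> real_of_int r + real_of_int q * real_of_int t"
      using rng[OF s] t by (metis add.commute diff_add_cancel of_int_add of_int_mult)
    hence "(lo - r) / q \<le> t" using q by (simp add: field_simps)
    hence 1: "a \<le> t" unfolding a_def by (simp add: ceiling_le_iff)
    have "real_of_int r + real_of_int q * real_of_int t \<le> lo + L"
      using rng[OF s] t by (metis add.commute diff_add_cancel of_int_add of_int_mult)
    hence "t \<le> (lo + L - r) / q" using q by (simp add: field_simps)
    hence 2: "t \<le> b" unfolding b_def by (simp add: le_floor_iff)
    show "s \<in> (\<lambda>t. r + q * t) ` {a..b}" using 1 2 t by (auto intro!: image_eqI[of _ _ t])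
  qed
  have "card S \<le> card ((\<lambda>t. r + q * t) ` {a..b})" by (rule card_mono[OF _ sub]) auto
  also have "\<dots> \<le> card {a..b}" by (rule card_image_le) auto
  finally have c: "real (card S) \<le> real (nat (b - a + 1))" by simp
  have "real_of_int b \<le> (lo + L - r) / q" unfolding b_def by simp
  moreover have "(lo - r) / q \<le> real_of_int a" unfolding a_def by simp
  ultimately have "real_of_int (b - a + 1) \<le> L / q + 1" using q by (simp add: field_simps)
  moreover have "0 \<le> L / q + 1" using q L by simp
  ultimately have "real (nat (b - a + 1)) \<le> L / q + 1" by (cases "b - a + 1 \<ge> 0") auto
  with c show ?thesis by linarith
qed


definition bx :: "pt \<Rightarrow> real \<Rightarrow> pt set" where
  "bx c R = {x. real_of_int \<bar>fst x - fst c\<bar> \<le> R \<and> real_of_int \<bar>snd x - snd c\<bar> \<le> R}"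

lemma abs_le_real_floor: "(real_of_int \<bar>d\<bar> \<le> R) = (- \<lfloor>R\<rfloor> \<le> d \<and> d \<le> \<lfloor>R\<rfloor>)"
  by (metis abs_le_iff le_floor_iff minus_le_iff)

lemma bx_eq: "bx c R = {fst c - \<lfloor>R\<rfloor> .. fst c + \<lfloor>R\<rfloor>} \<times> {snd c - \<lfloor>R\<rfloor> .. snd c + \<lfloor>R\<rfloor>}"
  unfolding bx_def abs_le_real_floor by auto

lemma finite_bx[simp]: "finite (bx c R)"
  unfolding bx_eq by simp

lemma card_bx: assumes "R \<ge> 0" shows "real (card (bx c R)) \<le> (2*R+1)^2"
proof -
  have f: "real_of_int \<lfloor>R\<rfloor> \<le> R" "0 \<le> \<lfloor>R\<rfloor>" using assms by auto
  have "card (bx c R) = nat (2*\<lfloor>R\<rfloor>+1) * nat (2*\<lfloor>R\<rfloor>+1)"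
    unfolding bx_eq card_cartesian_product by simp
  also have "real \<dots> = (2 * real_of_int \<lfloor>R\<rfloor> + 1)^2" using f by (simp add: power2_eq_square)
  also have "\<dots> \<le> (2*R+1)^2" using f by (intro power_mono) auto
  finally show ?thesis .
qed

definition rho :: "pt \<Rightarrow> real" where
  "rho w = real_of_int (gcd (fst w) (snd w)) / real_of_int (max \<bar>fst w\<bar> \<bar>snd w\<bar>)"

lemma line_card1:
  fixes a b k :: int
  assumes b: "b \<noteq> 0" and R: "R \<ge> 0"
  shows "real (card {x \<in> bx c R. a * fst x + b * snd x = k}) \<le> 1 + 2*R * gcd a b / \<bar>b\<bar>"
proof (cases "{x \<in> bx c R. a * fst x + b * snd x = k} = {}")
  case True
  have "0 \<le> 2*R * gcd a b / \<bar>b\<bar>" using R by simp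
  then show ?thesis unfolding True by simp
next
  case False
  define S where "S = {x \<in> bx c R. a * fst x + b * snd x = k}"
  obtain x0 where x0: "x0 \<in> S" using False S_def by auto
  define g where "g = gcd a b"
  have gpos: "g > 0" using b g_def by simp
  define q where "q = \<bar>b\<bar> div g"
  have gb: "g dvd \<bar>b\<bar>" unfolding g_def by simp
  have qg: "real_of_int q = \<bar>b\<bar> / g" unfolding q_def using gb gpos
    by (simp add: real_of_int_div)
  have qpos: "q > 0" using qg gpos b
    by (smt (verit, del_insts) divide_pos_pos of_int_0_less_iff zero_less_abs_iff)
  have cop: "coprime (a div g) (b div g)" unfolding g_def using b by (simp add: div_gcd_coprime)
  have inj: "inj_on fst S"
  proof (rule inj_onI)
    fix x y assume "x \<in> S" "y \<in> S" "fst x = fst y"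
    then have "b * snd x = b * snd y" unfolding S_def by auto
    then have "snd x = snd y" using b by simp
    then show "x = y" using \<open>fst x = fst y\<close> by (simp add: prod_eq_iff)
  qed
  have "real (card (fst ` S)) \<le> (2*R) / q + 1"
  proof (rule prog_card[where r = "fst x0" and lo = "fst c - R"])
    show "q > 0" by (rule qpos)
    show "0 \<le> 2*R" using R by simp
    fix s assume "s \<in> fst ` S"
    then obtain x where x: "x \<in> S" "s = fst x" by auto
    have "real_of_int \<bar>fst x - fst c\<bar> \<le> R" using x unfolding S_def bx_def by auto
    then show "real_of_int (fst c) - R \<le> real_of_int s \<and> real_of_int s \<le> real_of_int (fst c) - R + 2 * R"
      using x by (auto simp: abs_le_iff)
    have e: "a * (fst x - fst x0) = - (b * (snd x - snd x0))" using x x0 unfolding S_def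
      by (auto simp: algebra_simps)
    have ga: "a = g * (a div g)" "b = g * (b div g)" unfolding g_def by simp_all
    have "g * ((a div g) * (fst x - fst x0)) = g * (- ((b div g) * (snd x - snd x0)))"
      using e ga by (metis mult.assoc mult_minus_right)
    then have "(a div g) * (fst x - fst x0) = - ((b div g) * (snd x - snd x0))" using gpos
      by (metis mult_cancel_left less_irrefl)
    then have "(b div g) dvd (a div g) * (fst x - fst x0)" by (metis dvd_minus_iff dvd_triv_left)
    then have "(b div g) dvd (fst x - fst x0)" using cop
      by (metis coprime_commute coprime_dvd_mult_right_iff)
    moreover have "q dvd (b div g)"
    proof -
      have "\<bar>b div g\<bar> = \<bar>b\<bar> div \<bar>g\<bar>" by (rule abs_div) (simp add: g_def)
      then have "q = \<bar>b div g\<bar>" unfolding q_def using gpos by simp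
      then show ?thesis by simp
    qed
    ultimately show "q dvd s - fst x0" using x by (meson dvd_trans)
  qed
  moreover have "card (fst ` S) = card S" using inj by (simp add: card_image)
  ultimately show ?thesis unfolding S_def[symmetric] g_def[symmetric] using qg gpos b
    by (simp add: field_simps)
qed


lemma line_card2:
  fixes a b k :: int
  assumes a: "a \<noteq> 0" and R: "R \<ge> 0"
  shows "real (card {x \<in> bx c R. a * fst x + b * snd x = k}) \<le> 1 + 2*R * gcd a b / \<bar>a\<bar>"
proof -
  have eq: "{x \<in> bx c R. a * fst x + b * snd x = k} = prod.swap ` {y \<in> bx (prod.swap c) R. b * fst y + a * snd y = k}"
    unfolding bx_def by (auto simp: image_iff algebra_simps)
  have "card {x \<in> bx c R. a * fst x + b * snd x = k} = card {y \<in> bx (prod.swap c) R. b * fst y + a * snd y = k}"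
    unfolding eq by (rule card_image) simp
  also have "real \<dots> \<le> 1 + 2*R * gcd b a / \<bar>a\<bar>" by (rule line_card1[OF a R])
  finally show ?thesis by (simp add: gcd.commute)
qed

lemma line_card:
  fixes a b k :: int
  assumes ab: "(a, b) \<noteq> (0, 0)" and R: "R \<ge> 0"
  shows "real (card {x \<in> bx c R. a * fst x + b * snd x = k}) \<le> 1 + 2*R * rho (a, b)"
proof (cases "\<bar>a\<bar> \<le> \<bar>b\<bar>")
  case True
  then have "b \<noteq> 0" using ab by auto
  moreover have "max \<bar>a\<bar> \<bar>b\<bar> = \<bar>b\<bar>" using True by simp
  ultimately show ?thesis using line_card1[where a=a and b=b and R=R and c=c and k=k] R unfolding rho_def by simp
next
  case False
  then have "a \<noteq> 0" using ab by auto
  moreover have "max \<bar>a\<bar> \<bar>b\<bar> = \<bar>a\<bar>" using False by simp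
  ultimately show ?thesis using line_card2[where a=a and b=b and R=R and c=c and k=k] R unfolding rho_def by simp
qed

definition prim :: "pt \<Rightarrow> pt" where
  "prim b = (fst b div gcd (fst b) (snd b), snd b div gcd (fst b) (snd b))"

definition nrm :: "pt \<Rightarrow> int" where
  "nrm p = max \<bar>fst p\<bar> \<bar>snd p\<bar>"

lemma prim_mult: "fst b = gcd (fst b) (snd b) * fst (prim b)" "snd b = gcd (fst b) (snd b) * snd (prim b)"
  unfolding prim_def by simp_all

lemma prim_props:
  assumes "b \<noteq> (0,0)"
  shows "prim b \<noteq> (0,0)" "nrm (prim b) \<ge> 1" "rho b = 1 / real_of_int (nrm (prim b))"
proof -
  define g where "g = gcd (fst b) (snd b)"
  have gpos: "g > 0" using assms unfolding g_def by (cases b) auto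
  have "fst b \<noteq> 0 \<or> snd b \<noteq> 0" using assms by (cases b) auto
  then show pn: "prim b \<noteq> (0,0)" using prim_mult[of b] by (auto simp: prod_eq_iff)
  then show "nrm (prim b) \<ge> 1" unfolding nrm_def by (auto simp: prod_eq_iff)
  have "\<bar>fst b\<bar> = g * \<bar>fst (prim b)\<bar>" "\<bar>snd b\<bar> = g * \<bar>snd (prim b)\<bar>"
    using prim_mult[of b] gpos unfolding g_def by (metis abs_mult abs_of_pos)+
  then have "max \<bar>fst b\<bar> \<bar>snd b\<bar> = g * nrm (prim b)" unfolding nrm_def using gpos
    by (simp add: max_mult_distrib_left)
  then show "rho b = 1 / real_of_int (nrm (prim b))" unfolding rho_def g_def[symmetric] using gpos
    by simp
qed

lemma fiber_card:
  assumes R: "R \<ge> 0" and p: "p \<noteq> (0,0)"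
  shows "real (card {b \<in> bx c R - {(0,0)}. prim b = p}) \<le> 2*R / nrm p + 1"
proof (cases "\<bar>snd p\<bar> \<le> \<bar>fst p\<bar>")
  case True
  define S where "S = {b \<in> bx c R - {(0,0)}. prim b = p}"
  have f0: "fst p \<noteq> 0" using True p by (auto simp: prod_eq_iff)
  have nr: "nrm p = \<bar>fst p\<bar>" unfolding nrm_def using True by simp
  have inj: "inj_on fst S"
  proof (rule inj_onI)
    fix x y assume xy: "x \<in> S" "y \<in> S" "fst x = fst y"
    have "gcd (fst x) (snd x) * fst p = gcd (fst y) (snd y) * fst p"
      using xy prim_mult[of x] prim_mult[of y] unfolding S_def by auto
    then have "gcd (fst x) (snd x) = gcd (fst y) (snd y)" using f0 by simp
    then have "snd x = snd y" using xy prim_mult[of x] prim_mult[of y] unfolding S_def by auto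
    then show "x = y" using xy by (simp add: prod_eq_iff)
  qed
  have "real (card (fst ` S)) \<le> (2*R) / \<bar>fst p\<bar> + 1"
  proof (rule prog_card[where r = 0 and lo = "fst c - R"])
    show "\<bar>fst p\<bar> > 0" using f0 by simp
    show "0 \<le> 2*R" using R by simp
    fix s assume "s \<in> fst ` S"
    then obtain x where x: "x \<in> S" "s = fst x" by auto
    have "real_of_int \<bar>fst x - fst c\<bar> \<le> R" using x unfolding S_def bx_def by auto
    then show "real_of_int (fst c) - R \<le> real_of_int s \<and> real_of_int s \<le> real_of_int (fst c) - R + 2 * R"
      using x by (auto simp: abs_le_iff)
    have "p = prim x" using x unfolding S_def by auto
    then have "fst x = gcd (fst x) (snd x) * fst p" using prim_mult[of x] by simp
    then show "\<bar>fst p\<bar> dvd s - 0" using x by (metis abs_dvd_iff diff_zero dvd_triv_right)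
  qed
  moreover have "card (fst ` S) = card S" using inj by (simp add: card_image)
  ultimately show ?thesis unfolding S_def[symmetric] nr by simp
next
  case False
  define S where "S = {b \<in> bx c R - {(0,0)}. prim b = p}"
  have f0: "snd p \<noteq> 0" using False by auto
  have nr: "nrm p = \<bar>snd p\<bar>" unfolding nrm_def using False by simp
  have inj: "inj_on snd S"
  proof (rule inj_onI)
    fix x y assume xy: "x \<in> S" "y \<in> S" "snd x = snd y"
    have "gcd (fst x) (snd x) * snd p = gcd (fst y) (snd y) * snd p"
      using xy prim_mult[of x] prim_mult[of y] unfolding S_def by auto
    then have "gcd (fst x) (snd x) = gcd (fst y) (snd y)" using f0 by simp
    then have "fst x = fst y" using xy prim_mult[of x] prim_mult[of y] unfolding S_def by auto
    then show "x = y" using xy by (simp add: prod_eq_iff)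
  qed
  have "real (card (snd ` S)) \<le> (2*R) / \<bar>snd p\<bar> + 1"
  proof (rule prog_card[where r = 0 and lo = "snd c - R"])
    show "\<bar>snd p\<bar> > 0" using f0 by simp
    show "0 \<le> 2*R" using R by simp
    fix s assume "s \<in> snd ` S"
    then obtain x where x: "x \<in> S" "s = snd x" by auto
    have "real_of_int \<bar>snd x - snd c\<bar> \<le> R" using x unfolding S_def bx_def by auto
    then show "real_of_int (snd c) - R \<le> real_of_int s \<and> real_of_int s \<le> real_of_int (snd c) - R + 2 * R"
      using x by (auto simp: abs_le_iff)
    have "p = prim x" using x unfolding S_def by auto
    then have "snd x = gcd (fst x) (snd x) * snd p" using prim_mult[of x] by simp
    then show "\<bar>snd p\<bar> dvd s - 0" using x by (metis abs_dvd_iff diff_zero dvd_triv_right)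
  qed
  moreover have "card (snd ` S) = card S" using inj by (simp add: card_image)
  ultimately show ?thesis unfolding S_def[symmetric] nr by simp
qed


lemma ln_step: "1 / (real m + 2) \<le> ln (real m + 2) - ln (real m + 1)"
proof -
  have "ln ((real m + 1) / (real m + 2)) \<le> (real m + 1) / (real m + 2) - 1"
    by (rule ln_le_minus_one) simp
  also have "\<dots> = - (1 / (real m + 2))" by (simp add: field_simps)
  finally have "ln (real m + 1) - ln (real m + 2) \<le> - (1 / (real m + 2))"
    by (simp add: ln_div)
  then show ?thesis by simp
qed

lemma hs_bound: "(\<Sum>x\<in>{-int m..int m}. 1 / (real_of_int \<bar>x\<bar> + 1)) \<le> 1 + 2 * ln (real m + 1)"
proof (induction m)
  case 0
  then show ?case by simp
next
  case (Suc m)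
  have eq: "{-int (Suc m)..int (Suc m)} = insert (-int m - 1) (insert (int m + 1) {-int m..int m})"
    by auto
  have "(\<Sum>x\<in>{-int (Suc m)..int (Suc m)}. 1 / (real_of_int \<bar>x\<bar> + 1))
      = 2 / (real m + 2) + (\<Sum>x\<in>{-int m..int m}. 1 / (real_of_int \<bar>x\<bar> + 1))"
    unfolding eq by simp
  also have "\<dots> \<le> 2 / (real m + 2) + 1 + 2 * ln (real m + 1)" using Suc.IH by simp
  also have "\<dots> \<le> 1 + 2 * ln (real (Suc m) + 1)" using ln_step[of m] by (simp add: add.commute)
  finally show ?case .
qed

lemma hs_bound_real:
  assumes "R \<ge> 0"
  shows "(\<Sum>x\<in>{-\<lfloor>R\<rfloor>..\<lfloor>R\<rfloor>}. 1 / (real_of_int \<bar>x\<bar> + 1)) \<le> 1 + 2 * ln (R + 1)"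
proof -
  define m where "m = nat \<lfloor>R\<rfloor>"
  have fm: "\<lfloor>R\<rfloor> = int m" unfolding m_def using assms by simp
  have "real m \<le> R" using fm by (metis floor_le_iff le_floor_iff of_int_of_nat_eq order_refl)
  then have "ln (real m + 1) \<le> ln (R + 1)" by simp
  then show ?thesis using hs_bound[of m] unfolding fm by simp
qed

lemma inv_nrm_sq:
  assumes "nrm p \<ge> 1"
  shows "1 / real_of_int (nrm p) ^ 2 \<le> 4 / ((real_of_int \<bar>fst p\<bar> + 1) * (real_of_int \<bar>snd p\<bar> + 1))"
proof -
  define n where "n = real_of_int (nrm p)"
  have n1: "n \<ge> 1" using assms n_def by simp
  have a: "real_of_int \<bar>fst p\<bar> + 1 \<le> n + 1" "real_of_int \<bar>snd p\<bar> + 1 \<le> n + 1"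
    unfolding n_def nrm_def by auto
  have "(real_of_int \<bar>fst p\<bar> + 1) * (real_of_int \<bar>snd p\<bar> + 1) \<le> (n+1)*(n+1)"
    using a by (intro mult_mono) auto
  also have "\<dots> \<le> 4 * n^2"
  proof -
    have "n * 1 \<le> n * n" using n1 by (intro mult_left_mono) auto
    then have "n \<le> n * n" by simp
    moreover have "(n+1)*(n+1) = n*n + 2*n + 1" "4 * n^2 = 4*(n*n)" by (simp_all add: algebra_simps power2_eq_square)
    ultimately show ?thesis using n1 by linarith
  qed
  finally have "(real_of_int \<bar>fst p\<bar> + 1) * (real_of_int \<bar>snd p\<bar> + 1) \<le> 4 * n^2" .
  moreover have "0 < (real_of_int \<bar>fst p\<bar> + 1) * (real_of_int \<bar>snd p\<bar> + 1)"
    by (intro mult_pos_pos) auto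
  ultimately have "4 / (4 * n^2) \<le> 4 / ((real_of_int \<bar>fst p\<bar> + 1) * (real_of_int \<bar>snd p\<bar> + 1))"
    using n1 by (intro divide_left_mono) (auto intro!: mult_pos_pos)
  then show ?thesis unfolding n_def[symmetric] by simp
qed

lemma sum_box_inv:
  assumes "R \<ge> 0"
  shows "(\<Sum>p\<in>bx (0,0) R. 4 / ((real_of_int \<bar>fst p\<bar> + 1) * (real_of_int \<bar>snd p\<bar> + 1)))
     \<le> 4 * (1 + 2 * ln (R + 1))^2"
proof -
  define I where "I = {-\<lfloor>R\<rfloor>..\<lfloor>R\<rfloor>}"
  define h where "h = (\<lambda>x::int. 1 / (real_of_int \<bar>x\<bar> + 1))"
  have bx: "bx (0,0) R = I \<times> I" unfolding bx_eq I_def by simp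
  have "(\<Sum>p\<in>bx (0,0) R. 4 / ((real_of_int \<bar>fst p\<bar> + 1) * (real_of_int \<bar>snd p\<bar> + 1)))
      = 4 * (\<Sum>p\<in>I \<times> I. h (fst p) * h (snd p))"
    unfolding bx h_def by (simp add: sum_distrib_left)
  also have "(\<Sum>p\<in>I \<times> I. h (fst p) * h (snd p)) = (\<Sum>x\<in>I. h x) * (\<Sum>y\<in>I. h y)"
    by (simp only: sum_product sum.cartesian_product) (simp add: case_prod_beta)
  also have "\<dots> = (\<Sum>x\<in>I. h x)^2" by (simp add: power2_eq_square)
  also have "\<dots> \<le> (1 + 2 * ln (R + 1))^2"
    using hs_bound_real[OF assms] unfolding I_def h_def
    by (intro power_mono) (auto intro: sum_nonneg)
  finally show ?thesis by simp
qed


lemma amgm_inv: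
  fixes n R :: real
  assumes n: "n \<ge> 1" and R: "R > 0"
  shows "(2*R / n + 1) * (1 / n) \<le> 5/2 * R * (1 / n^2) + 1 / (2*R)"
proof -
  have "0 \<le> (R - n)^2 / (2 * R * n^2)" using R n by simp
  also have "(R - n)^2 / (2 * R * n^2) = R / (2 * n^2) - 1/n + 1/(2*R)"
    using R n by (simp add: field_simps power2_eq_square)
  finally have "1/n \<le> R / (2 * n^2) + 1/(2*R)" by simp
  moreover have "(2*R / n + 1) * (1 / n) = 2*R / n^2 + 1/n" using n by (simp add: field_simps power2_eq_square)
  ultimately show ?thesis by simp
qed

lemma sum_rho:
  assumes R: "R \<ge> 1"
  shows "(\<Sum>b\<in>bx c R - {(0,0)}. rho b) \<le> 37 * R * (1 + 2 * ln (R + 1))^2"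
proof -
  define B where "B = bx c R - {(0,0)}"
  define P where "P = prim ` B"
  define lam where "lam = 1 + 2 * ln (R + 1)"
  have lam1: "lam \<ge> 1" unfolding lam_def using R by simp
  have finB: "finite B" unfolding B_def by simp
  have finP: "finite P" unfolding P_def using finB by simp
  have P0: "p \<noteq> (0,0) \<and> nrm p \<ge> 1" if "p \<in> P" for p
  proof -
    obtain b where b: "b \<in> B" "p = prim b" using \<open>p \<in> P\<close> unfolding P_def by auto
    then have "b \<noteq> (0,0)" unfolding B_def by auto
    then show ?thesis using prim_props[of b] b by auto
  qed
  have cardP: "real (card P) \<le> 9 * R^2"
  proof -
    have "card P \<le> card B" unfolding P_def using finB by (rule card_image_le)
    also have "\<dots> \<le> card (bx c R)" unfolding B_def by (rule card_mono) auto
    finally have "real (card P) \<le> (2*R+1)^2" using card_bx[of R c] R by linarith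
    also have "\<dots> \<le> (3*R)^2" using R by (intro power_mono) auto
    finally show ?thesis by (simp add: power2_eq_square)
  qed
  have "(\<Sum>b\<in>B. rho b) = (\<Sum>b\<in>B. 1 / real_of_int (nrm (prim b)))"
    unfolding B_def by (rule sum.cong) (auto simp: prim_props)
  also have "\<dots> = (\<Sum>p\<in>P. \<Sum>b\<in>{b\<in>B. prim b = p}. 1 / real_of_int (nrm (prim b)))"
    unfolding P_def using finB by (rule sum.image_gen)
  also have "\<dots> = (\<Sum>p\<in>P. real (card {b\<in>B. prim b = p}) * (1 / real_of_int (nrm p)))"
    by (rule sum.cong) auto
  also have "\<dots> \<le> (\<Sum>p\<in>P. (2*R / real_of_int (nrm p) + 1) * (1 / real_of_int (nrm p)))"
  proof (rule sum_mono)
    fix p assume "p \<in> P"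
    then have "real (card {b\<in>B. prim b = p}) \<le> 2*R / nrm p + 1"
      unfolding B_def using fiber_card[of R p c] P0 R by simp
    moreover have "0 \<le> 1 / real_of_int (nrm p)" using P0[OF \<open>p \<in> P\<close>] by simp
    ultimately show "real (card {b\<in>B. prim b = p}) * (1 / real_of_int (nrm p))
        \<le> (2*R / real_of_int (nrm p) + 1) * (1 / real_of_int (nrm p))"
      by (rule mult_right_mono)
  qed
  also have "\<dots> \<le> (\<Sum>p\<in>P. 5/2 * R * (1 / real_of_int (nrm p)^2) + 1 / (2*R))"
  proof (rule sum_mono)
    fix p assume "p \<in> P"
    then have "real_of_int (nrm p) \<ge> 1" using P0 by simp
    then show "(2*R / real_of_int (nrm p) + 1) * (1 / real_of_int (nrm p))
        \<le> 5/2 * R * (1 / real_of_int (nrm p)^2) + 1 / (2*R)"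
      using R by (intro amgm_inv) auto
  qed
  also have "\<dots> = 5/2 * R * (\<Sum>p\<in>P. 1 / real_of_int (nrm p)^2) + real (card P) / (2*R)"
    by (simp add: sum.distrib sum_distrib_left)
  also have "(\<Sum>p\<in>P. 1 / real_of_int (nrm p)^2) \<le> 4 * lam^2 + 9"
  proof -
    define X where "X = bx (0,0) R"
    define h where "h = (\<lambda>p::pt. 4 / ((real_of_int \<bar>fst p\<bar> + 1) * (real_of_int \<bar>snd p\<bar> + 1)))"
    have hnn: "\<And>p. h p \<ge> 0" unfolding h_def by simp
    have "(\<Sum>p\<in>P. 1 / real_of_int (nrm p)^2) \<le> (\<Sum>p\<in>P. (if p \<in> X then h p else 0) + 1 / R^2)"
    proof (rule sum_mono)
      fix p assume pP: "p \<in> P"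
      show "1 / real_of_int (nrm p)^2 \<le> (if p \<in> X then h p else 0) + 1 / R^2"
      proof (cases "p \<in> X")
        case True
        then show ?thesis using inv_nrm_sq[of p] P0[OF pP] unfolding h_def
          by (simp add: add_increasing2)
      next
        case False
        then have "R < real_of_int (nrm p)" unfolding X_def bx_def nrm_def by auto
        then have "R^2 \<le> real_of_int (nrm p)^2" using R by (intro power_mono) auto
        moreover have "0 < real_of_int (nrm p)^2 * R^2" using R P0[OF pP] by simp
        ultimately have "1 / real_of_int (nrm p)^2 \<le> 1 / R^2"
          by (intro divide_left_mono) auto
        then show ?thesis using False by simp
      qed
    qed
    also have "\<dots> = (\<Sum>p\<in>P \<inter> X. h p) + real (card P) / R^2"
      using finP by (simp add: sum.distrib sum.inter_restrict)
    also have "(\<Sum>p\<in>P \<inter> X. h p) \<le> (\<Sum>p\<in>X. h p)"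
      by (rule sum_mono2) (auto simp: X_def hnn)
    also have "(\<Sum>p\<in>X. h p) \<le> 4 * lam^2"
      unfolding X_def h_def lam_def using sum_box_inv R by simp
    also have "real (card P) / R^2 \<le> 9"
      using cardP R by (simp add: field_simps)
    finally show ?thesis by simp
  qed
  finally have "(\<Sum>b\<in>B. rho b) \<le> 5/2 * R * (4 * lam^2 + 9) + real (card P) / (2*R)"
    using R by simp
  also have "real (card P) / (2*R) \<le> 9 * R^2 / (2 * R)"
    using cardP R by (intro divide_right_mono) auto
  also have "9 * R^2 / (2 * R) = 9/2 * R" using R by (simp add: power2_eq_square)
  finally have "(\<Sum>b\<in>B. rho b) \<le> 10 * R * lam^2 + 27 * R" by (simp add: algebra_simps)
  also have "\<dots> \<le> 37 * R * lam^2"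
  proof -
    have "1 \<le> lam^2" using lam1 by simp
    then have "27 * R * 1 \<le> 27 * R * lam^2" using R by (intro mult_left_mono) auto
    then show ?thesis by simp
  qed
  finally show ?thesis unfolding B_def lam_def .
qed


lemma card_pairs_snd:
  assumes "finite S"
  shows "card S = (\<Sum>y\<in>snd ` S. card {x. (x, y) \<in> S})"
proof -
  have "card S = (\<Sum>s\<in>S. 1)" by simp
  also have "\<dots> = (\<Sum>y\<in>snd ` S. \<Sum>s\<in>{s\<in>S. snd s = y}. 1)"
    using assms by (rule sum.image_gen)
  also have "\<dots> = (\<Sum>y\<in>snd ` S. card {x. (x, y) \<in> S})"
  proof (rule sum.cong)
    fix y assume "y \<in> snd ` S"
    have "{s\<in>S. snd s = y} = (\<lambda>x. (x, y)) ` {x. (x, y) \<in> S}" by force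
    moreover have "inj_on (\<lambda>x. (x, y)) {x. (x, y) \<in> S}" by (rule inj_onI) simp
    ultimately show "(\<Sum>s\<in>{s\<in>S. snd s = y}. 1) = card {x. (x, y) \<in> S}"
      by (simp add: card_image)
  qed simp
  finally show ?thesis .
qed

definition Lam :: "real \<Rightarrow> real" where
  "Lam R = (1 + 2 * ln (R + 1))^2"

lemma Lam_ge1: "R \<ge> 0 \<Longrightarrow> Lam R \<ge> 1"
  unfolding Lam_def by simp

lemma Lam_mono: "0 \<le> R \<Longrightarrow> R \<le> R' \<Longrightarrow> Lam R \<le> Lam R'"
  unfolding Lam_def by (intro power_mono) auto

lemma rho_neg: "rho (a, - b) = rho (a, b)"
  unfolding rho_def by simp

lemma L1:
  fixes S :: "(pt \<times> pt) set" and n :: pt and k :: "pt \<Rightarrow> int"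
  assumes R1: "R1 \<ge> 0" and R2: "R2 \<ge> 1"
    and S: "\<And>x y. (x, y) \<in> S \<Longrightarrow> x \<in> bx (0,0) R1 \<and> y \<in> bx (0,0) R2 \<and> y \<noteq> n \<and>
            (fst y - fst n) * fst x - (snd y - snd n) * snd x = k y"
  shows "real (card S) \<le> (2*R2+1)^2 + 74 * R1 * R2 * Lam R2"
proof -
  have Ssub: "S \<subseteq> bx (0,0) R1 \<times> bx (0,0) R2" using S by auto
  then have finS: "finite S" by (rule finite_subset) simp
  define Y where "Y = bx (0,0) R2 - {n}"
  have sY: "snd ` S \<subseteq> Y" unfolding Y_def using S by force
  have "real (card S) = (\<Sum>y\<in>snd ` S. real (card {x. (x, y) \<in> S}))"
    using card_pairs_snd[OF finS] by simp
  also have "\<dots> \<le> (\<Sum>y\<in>snd ` S. 1 + 2*R1 * rho (fst y - fst n, snd y - snd n))"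
  proof (rule sum_mono)
    fix y assume y: "y \<in> snd ` S"
    then have yn: "y \<noteq> n" using S by force
    have ne: "(fst y - fst n, - (snd y - snd n)) \<noteq> (0, 0)" using yn by (auto simp: prod_eq_iff)
    have "{x. (x, y) \<in> S} \<subseteq> {x \<in> bx (0,0) R1. (fst y - fst n) * fst x + (- (snd y - snd n)) * snd x = k y}"
    proof
      fix x assume "x \<in> {x. (x, y) \<in> S}"
      then have h: "(x, y) \<in> S" by simp
      have "(fst y - fst n) * fst x + (- (snd y - snd n)) * snd x = (fst y - fst n) * fst x - (snd y - snd n) * snd x"
        by (simp add: algebra_simps)
      then show "x \<in> {x \<in> bx (0,0) R1. (fst y - fst n) * fst x + (- (snd y - snd n)) * snd x = k y}"
        using S[OF h] by simp
    qed
    then have "card {x. (x, y) \<in> S} \<le> card {x \<in> bx (0,0) R1. (fst y - fst n) * fst x + (- (snd y - snd n)) * snd x = k y}"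
      by (intro card_mono) auto
    also have "real \<dots> \<le> 1 + 2*R1 * rho (fst y - fst n, - (snd y - snd n))"
      by (rule line_card[OF ne R1])
    also have "rho (fst y - fst n, - (snd y - snd n)) = rho (fst y - fst n, snd y - snd n)"
      by (rule rho_neg)
    finally show "real (card {x. (x, y) \<in> S}) \<le> 1 + 2*R1 * rho (fst y - fst n, snd y - snd n)"
      by simp
  qed
  also have "\<dots> \<le> (\<Sum>y\<in>Y. 1 + 2*R1 * rho (fst y - fst n, snd y - snd n))"
    by (rule sum_mono2) (use sY R1 in \<open>auto simp: Y_def rho_def\<close>)
  also have "\<dots> = real (card Y) + 2*R1 * (\<Sum>y\<in>Y. rho (fst y - fst n, snd y - snd n))"
    by (simp add: sum.distrib sum_distrib_left)
  finally have c1: "real (card S) \<le> real (card Y) + 2*R1 * (\<Sum>y\<in>Y. rho (fst y - fst n, snd y - snd n))" .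
  have "(\<Sum>y\<in>Y. rho (fst y - fst n, snd y - snd n)) = (\<Sum>b\<in>bx (- fst n, - snd n) R2 - {(0,0)}. rho b)"
  proof -
    define sh where "sh = (\<lambda>y::pt. (fst y - fst n, snd y - snd n))"
    have inj: "inj_on sh Y" unfolding sh_def by (rule inj_onI) (auto simp: prod_eq_iff)
    have im: "sh ` Y = bx (- fst n, - snd n) R2 - {(0,0)}"
    proof
      show "sh ` Y \<subseteq> bx (- fst n, - snd n) R2 - {(0,0)}"
        unfolding sh_def Y_def bx_def by (auto simp: prod_eq_iff)
      show "bx (- fst n, - snd n) R2 - {(0,0)} \<subseteq> sh ` Y"
      proof
        fix b assume b: "b \<in> bx (- fst n, - snd n) R2 - {(0,0)}"
        then have "(fst b + fst n, snd b + snd n) \<in> Y" unfolding Y_def bx_def by (auto simp: prod_eq_iff)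
        moreover have "b = sh (fst b + fst n, snd b + snd n)" unfolding sh_def by simp
        ultimately show "b \<in> sh ` Y" by blast
      qed
    qed
    show ?thesis using sum.reindex[OF inj, of rho] unfolding im by (simp add: sh_def)
  qed
  also have "\<dots> \<le> 37 * R2 * (1 + 2 * ln (R2 + 1))^2" by (rule sum_rho[OF R2])
  finally have "2*R1 * (\<Sum>y\<in>Y. rho (fst y - fst n, snd y - snd n)) \<le> 2*R1 * (37 * R2 * Lam R2)"
    unfolding Lam_def using R1 by (intro mult_left_mono) auto
  moreover have "real (card Y) \<le> (2*R2+1)^2"
  proof -
    have "card Y \<le> card (bx (0,0) R2)" unfolding Y_def by (rule card_mono) auto
    then show ?thesis using card_bx[of R2 "(0,0)"] R2 by linarith
  qed
  ultimately show ?thesis using c1 by (simp add: algebra_simps)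
qed


lemma card_pairs_sum:
  assumes "finite U" "finite V"
  shows "card {(u, v) \<in> U \<times> V. P u v} = (\<Sum>u\<in>U. card {v \<in> V. P u v})"
proof -
  have "{(u, v) \<in> U \<times> V. P u v} = (SIGMA u:U. {v \<in> V. P u v})" by auto
  then show ?thesis using assms by (simp add: card_SigmaI)
qed

lemma cs_pairs:
  fixes f :: "'a \<Rightarrow> int" and g :: "'b \<Rightarrow> int"
  assumes U: "finite U" and V: "finite V" and t: "t > 0"
  shows "real (card {(u, v) \<in> U \<times> V. f u = g v})
    \<le> (t * real (card {(u, u') \<in> U \<times> U. f u = f u'}) + real (card {(v, v') \<in> V \<times> V. g v = g v'}) / t) / 2"
proof -
  define \<alpha> where "\<alpha> = (\<lambda>w. real (card {u \<in> U. f u = w}))"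
  define \<beta> where "\<beta> = (\<lambda>w. real (card {v \<in> V. g v = w}))"
  have gen: "(\<Sum>x\<in>X. F (h x)) = (\<Sum>w\<in>h ` X. real (card {x \<in> X. h x = w}) * F w)" if "finite X"
    for X :: "'c set" and h :: "'c \<Rightarrow> int" and F :: "int \<Rightarrow> real"
  proof -
    have "(\<Sum>x\<in>X. F (h x)) = (\<Sum>w\<in>h ` X. \<Sum>x\<in>{x \<in> X. h x = w}. F (h x))"
      using that by (rule sum.image_gen)
    also have "\<dots> = (\<Sum>w\<in>h ` X. real (card {x \<in> X. h x = w}) * F w)"
      by (rule sum.cong) auto
    finally show ?thesis .
  qed
  have e1: "real (card {(u, v) \<in> U \<times> V. f u = g v}) = (\<Sum>w\<in>f ` U. \<alpha> w * \<beta> w)"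
  proof -
    have "real (card {(u, v) \<in> U \<times> V. f u = g v}) = (\<Sum>u\<in>U. \<beta> (f u))"
    proof -
      have "card {(u, v) \<in> U \<times> V. f u = g v} = (\<Sum>u\<in>U. card {v \<in> V. f u = g v})"
        by (rule card_pairs_sum[OF U V])
      moreover have "\<And>u. {v \<in> V. f u = g v} = {v \<in> V. g v = f u}" by auto
      ultimately show ?thesis unfolding \<beta>_def by simp
    qed
    also have "\<dots> = (\<Sum>w\<in>f ` U. \<alpha> w * \<beta> w)" unfolding \<alpha>_def by (rule gen[OF U])
    finally show ?thesis .
  qed
  have e2: "real (card {(u, u') \<in> U \<times> U. f u = f u'}) = (\<Sum>w\<in>f ` U. \<alpha> w ^ 2)"
  proof -
    have "real (card {(u, u') \<in> U \<times> U. f u = f u'}) = (\<Sum>u\<in>U. \<alpha> (f u))"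
    proof -
      have "card {(u, u') \<in> U \<times> U. f u = f u'} = (\<Sum>u\<in>U. card {v \<in> U. f u = f v})"
        by (rule card_pairs_sum[OF U U])
      moreover have "\<And>u. {v \<in> U. f u = f v} = {v \<in> U. f v = f u}" by auto
      ultimately show ?thesis unfolding \<alpha>_def by simp
    qed
    also have "\<dots> = (\<Sum>w\<in>f ` U. \<alpha> w * \<alpha> w)" unfolding \<alpha>_def by (rule gen[OF U])
    finally show ?thesis by (simp add: power2_eq_square)
  qed
  have e3: "real (card {(v, v') \<in> V \<times> V. g v = g v'}) = (\<Sum>w\<in>g ` V. \<beta> w ^ 2)"
  proof -
    have "real (card {(v, v') \<in> V \<times> V. g v = g v'}) = (\<Sum>v\<in>V. \<beta> (g v))"
    proof -
      have "card {(v, v') \<in> V \<times> V. g v = g v'} = (\<Sum>u\<in>V. card {v \<in> V. g u = g v})"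
        by (rule card_pairs_sum[OF V V])
      moreover have "\<And>u. {v \<in> V. g u = g v} = {v \<in> V. g v = g u}" by auto
      ultimately show ?thesis unfolding \<beta>_def by simp
    qed
    also have "\<dots> = (\<Sum>w\<in>g ` V. \<beta> w * \<beta> w)" unfolding \<beta>_def by (rule gen[OF V])
    finally show ?thesis by (simp add: power2_eq_square)
  qed
  have "(\<Sum>w\<in>f ` U. \<alpha> w * \<beta> w) \<le> (\<Sum>w\<in>f ` U. (t * \<alpha> w ^ 2 + \<beta> w ^ 2 / t) / 2)"
  proof (rule sum_mono)
    fix w
    have "0 \<le> (t * \<alpha> w - \<beta> w)^2 / t" using t by simp
    also have "(t * \<alpha> w - \<beta> w)^2 / t = t * \<alpha> w ^ 2 - 2 * \<alpha> w * \<beta> w + \<beta> w ^ 2 / t"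
      using t by (simp add: field_simps power2_eq_square)
    finally show "\<alpha> w * \<beta> w \<le> (t * \<alpha> w ^ 2 + \<beta> w ^ 2 / t) / 2" by simp
  qed
  also have "\<dots> = (t * (\<Sum>w\<in>f ` U. \<alpha> w ^ 2) + (\<Sum>w\<in>f ` U. \<beta> w ^ 2) / t) / 2"
    by (simp only: sum_divide_distrib[symmetric] sum.distrib sum_distrib_left[symmetric])
  also have "(\<Sum>w\<in>f ` U. \<beta> w ^ 2) \<le> (\<Sum>w\<in>g ` V. \<beta> w ^ 2)"
  proof -
    have "(\<Sum>w\<in>f ` U. \<beta> w ^ 2) \<le> (\<Sum>w\<in>f ` U \<union> g ` V. \<beta> w ^ 2)"
      by (rule sum_mono2) (use U V in auto)
    also have "\<dots> = (\<Sum>w\<in>g ` V. \<beta> w ^ 2)"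
    proof (rule sum.mono_neutral_right)
      show "\<forall>w\<in>f ` U \<union> g ` V - g ` V. \<beta> w ^ 2 = 0"
      proof
        fix w assume "w \<in> f ` U \<union> g ` V - g ` V"
        then have "{v \<in> V. g v = w} = {}" by auto
        then have "card {v \<in> V. g v = w} = 0" by (metis card.empty)
        then show "\<beta> w ^ 2 = 0" unfolding \<beta>_def by simp
      qed
    qed (use U V in auto)
    finally show ?thesis .
  qed
  finally show ?thesis using e1 e2 e3 t by (simp add: divide_right_mono)
qed


lemma diag_alg:
  fixes a1 a2 b1 b2 n1 n2 :: int
  assumes "(a1 - n1)^2 - (a2 - n2)^2 = (b1 - n1)^2 - (b2 - n2)^2"
  shows "(a1 - b1) * b1 - (a2 - b2) * b2 = (2*((a1-b1)*n1 - (a2-b2)*n2) - ((a1-b1)^2 - (a2-b2)^2)) div 2"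
proof -
  have "2 * ((a1 - b1) * b1 - (a2 - b2) * b2) - (2*((a1-b1)*n1 - (a2-b2)*n2) - ((a1-b1)^2 - (a2-b2)^2))
     = ((a1 - n1)^2 - (a2 - n2)^2) - ((b1 - n1)^2 - (b2 - n2)^2)"
    by (simp add: algebra_simps power2_eq_square)
  then have "2 * ((a1 - b1) * b1 - (a2 - b2) * b2) = (2*((a1-b1)*n1 - (a2-b2)*n2) - ((a1-b1)^2 - (a2-b2)^2))"
    using assms by simp
  then show ?thesis by (metis nonzero_mult_div_cancel_left zero_neq_numeral)
qed

lemma diag_count:
  fixes n :: pt
  assumes R: "R \<ge> 1"
  shows "real (card {(u, u') \<in> bx (0,0) R \<times> bx (0,0) R.
      hmod2 (fst u - fst n, snd u - snd n) = hmod2 (fst u' - fst n, snd u' - snd n)}) \<le> 182 * R^2 * Lam (2*R)"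
proof -
  define S where "S = {(u, u') \<in> bx (0,0) R \<times> bx (0,0) R.
      hmod2 (fst u - fst n, snd u - snd n) = hmod2 (fst u' - fst n, snd u' - snd n)}"
  define D0 where "D0 = {p \<in> S. fst p = snd p}"
  define S1 where "S1 = {p \<in> S. fst p \<noteq> snd p}"
  have finS: "finite S" unfolding S_def
    by (rule finite_subset[of _ "bx (0,0) R \<times> bx (0,0) R"]) auto
  have "S = D0 \<union> S1" unfolding D0_def S1_def by auto
  then have "card S \<le> card D0 + card S1" by (metis card_Un_le)
  moreover have "card D0 \<le> card (bx (0,0) R)"
  proof -
    have "D0 \<subseteq> (\<lambda>u. (u, u)) ` bx (0,0) R" unfolding D0_def S_def by (auto simp: image_iff prod_eq_iff)
    then have "card D0 \<le> card ((\<lambda>u. (u, u)) ` bx (0,0) R)" by (intro card_mono) auto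
    also have "\<dots> \<le> card (bx (0,0) R)" by (rule card_image_le) simp
    finally show ?thesis .
  qed
  moreover have "real (card S1) \<le> (2*(2*R)+1)^2 + 74 * R * (2*R) * Lam (2*R)"
  proof -
    define \<phi> where "\<phi> = (\<lambda>p::pt\<times>pt. (snd p, (fst (fst p) - fst (snd p), snd (fst p) - snd (snd p))))"
    have inj: "inj_on \<phi> S1" unfolding \<phi>_def by (rule inj_onI) (auto simp: prod_eq_iff)
    have "real (card (\<phi> ` S1)) \<le> (2*(2*R)+1)^2 + 74 * R * (2*R) * Lam (2*R)"
    proof (rule L1[where n = "(0,0)" and k = "\<lambda>y. (2*(fst y * fst n - snd y * snd n) - ((fst y)^2 - (snd y)^2)) div 2"])
      show "0 \<le> R" using R by simp
      show "1 \<le> 2*R" using R by simp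
      fix x y assume xy: "(x, y) \<in> \<phi> ` S1"
      then obtain u u' where uu: "(u, u') \<in> S1" "x = u'" "y = (fst u - fst u', snd u - snd u')"
        unfolding \<phi>_def by auto
      then have mem: "u \<in> bx (0,0) R" "u' \<in> bx (0,0) R" "u \<noteq> u'"
        and h: "hmod2 (fst u - fst n, snd u - snd n) = hmod2 (fst u' - fst n, snd u' - snd n)"
        unfolding S1_def S_def by auto
      have "x \<in> bx (0,0) R" using mem uu by simp
      moreover have "y \<in> bx (0,0) (2*R)" using mem uu unfolding bx_def by auto
      moreover have "y \<noteq> (0,0)" using mem uu by (auto simp: prod_eq_iff)
      moreover have "(fst y - fst (0::int,0::int)) * fst x - (snd y - snd (0::int,0::int)) * snd x
          = (2*(fst y * fst n - snd y * snd n) - ((fst y)^2 - (snd y)^2)) div 2"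
        using diag_alg[of "fst u" "fst n" "snd u" "snd n" "fst u'" "snd u'"] h uu
        unfolding hmod2_def by simp
      ultimately show "x \<in> bx (0,0) R \<and> y \<in> bx (0,0) (2*R) \<and> y \<noteq> (0,0) \<and>
          (fst y - fst (0::int,0::int)) * fst x - (snd y - snd (0::int,0::int)) * snd x
          = (2*(fst y * fst n - snd y * snd n) - ((fst y)^2 - (snd y)^2)) div 2" by blast
    qed
    then show ?thesis using inj by (simp add: card_image)
  qed
  ultimately have "real (card S) \<le> (2*R+1)^2 + ((2*(2*R)+1)^2 + 74 * R * (2*R) * Lam (2*R))"
    using card_bx[of R "(0,0)"] R by linarith
  also have "\<dots> \<le> 9 * R^2 * Lam (2*R) + 25 * R^2 * Lam (2*R) + 148 * R^2 * Lam (2*R)"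
  proof -
    have L: "Lam (2*R) \<ge> 1" using R by (intro Lam_ge1) simp
    have "(2*R+1)^2 \<le> (3*R)^2" using R by (intro power_mono) auto
    also have "\<dots> = 9 * R^2 * 1" by (simp add: power2_eq_square)
    also have "\<dots> \<le> 9 * R^2 * Lam (2*R)" using L by (intro mult_left_mono) auto
    finally have 1: "(2*R+1)^2 \<le> 9 * R^2 * Lam (2*R)" .
    have "(2*(2*R)+1)^2 \<le> (5*R)^2" using R by (intro power_mono) auto
    also have "\<dots> = 25 * R^2 * 1" by (simp add: power2_eq_square)
    also have "\<dots> \<le> 25 * R^2 * Lam (2*R)" using L by (intro mult_left_mono) auto
    finally have 2: "(2*(2*R)+1)^2 \<le> 25 * R^2 * Lam (2*R)" .
    have 3: "74 * R * (2*R) * Lam (2*R) = 148 * R^2 * Lam (2*R)" by (simp add: power2_eq_square)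
    show ?thesis using 1 2 3 by linarith
  qed
  finally show ?thesis unfolding S_def by simp
qed


lemma dyadic_ge1: "dyadic N \<Longrightarrow> N \<ge> 1"
  unfolding dyadic_def by auto

lemma sim_bx:
  assumes "sim m N" "N \<ge> 1"
  shows "m \<in> bx (0,0) (2*N)"
proof -
  have e: "enorm m < 2*N" using assms unfolding sim_def by (auto split: if_splits)
  have "real_of_int \<bar>fst m\<bar> = sqrt (real_of_int (fst m)^2)" by simp
  also have "\<dots> \<le> enorm m" unfolding enorm_def by simp
  finally have 1: "real_of_int \<bar>fst m\<bar> \<le> 2*N" using e by simp
  have "real_of_int \<bar>snd m\<bar> = sqrt (real_of_int (snd m)^2)" by simp
  also have "\<dots> \<le> enorm m" unfolding enorm_def by simp
  finally have 2: "real_of_int \<bar>snd m\<bar> \<le> 2*N" using e by simp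
  show ?thesis using 1 2 unfolding bx_def by simp
qed

lemma gm_alg:
  fixes x1 x2 y1 y2 z1 z2 w1 w2 \<mu> :: int
  assumes "x1 - y1 + z1 = w1" "x2 - y2 + z2 = w2"
    "(w1^2 - w2^2) - (x1^2 - x2^2) + (y1^2 - y2^2) - (z1^2 - z2^2) = \<mu>"
  shows "2*((x1 - w1)*(z1 - w1) - (x2 - w2)*(z2 - w2)) = \<mu>"
proof -
  have y: "y1 = x1 + z1 - w1" "y2 = x2 + z2 - w2" using assms by auto
  have "(w1^2 - w2^2) - (x1^2 - x2^2) + (y1^2 - y2^2) - (z1^2 - z2^2) = 2*((x1 - w1)*(z1 - w1) - (x2 - w2)*(z2 - w2))"
    unfolding y by (simp add: algebra_simps power2_eq_square)
  then show ?thesis using assms by simp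
qed

lemma gm_alg2:
  fixes x1 x2 y1 y2 z1 z2 w1 w2 \<mu> :: int
  assumes "x1 - y1 + z1 = w1" "x2 - y2 + z2 = w2"
    "(w1^2 - w2^2) - (x1^2 - x2^2) + (y1^2 - y2^2) - (z1^2 - z2^2) = \<mu>"
  shows "(2*x1 - y1 - w1)^2 - (2*x2 - y2 - w2)^2 = (y1 - w1)^2 - (y2 - w2)^2 - 2*\<mu>"
proof -
  have z: "z1 = w1 - x1 + y1" "z2 = w2 - x2 + y2" using assms by auto
  have "(2*x1 - y1 - w1)^2 - (2*x2 - y2 - w2)^2 = (y1 - w1)^2 - (y2 - w2)^2
     - 2*((w1^2 - w2^2) - (x1^2 - x2^2) + (y1^2 - y2^2) - (z1^2 - z2^2))"
    unfolding z by (simp add: algebra_simps power2_eq_square)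
  then show ?thesis using assms by simp
qed

lemma mem_GM:
  assumes "(n1, n2, n3) \<in> Gamma_minus \<mu> n"
  shows "fst n1 - fst n2 + fst n3 = fst n" "snd n1 - snd n2 + snd n3 = snd n" "n \<noteq> n1" "n \<noteq> n3"
    "((fst n)^2 - (snd n)^2) - ((fst n1)^2 - (snd n1)^2) + ((fst n2)^2 - (snd n2)^2) - ((fst n3)^2 - (snd n3)^2) = \<mu>"
  using assms unfolding Gamma_minus_def Gamma_def hmod2_def by auto

lemma half_eq: "2 * (e::int) = \<mu> \<Longrightarrow> e = \<mu> div 2"
  by auto

lemma Lam_bound:
  assumes M: "M \<ge> 1" and th: "\<theta> > 0"
  shows "Lam (12 * M) \<le> (9 + 4/\<theta>)^2 * M powr \<theta>"
proof -
  define p where "p = M powr (\<theta>/2)"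
  have p1: "p \<ge> 1" unfolding p_def using M th by (simp add: ge_one_powr_ge_zero)
  have "ln p \<le> p - 1" using p1 by (intro ln_le_minus_one) simp
  then have "ln p \<le> p" by simp
  moreover have "ln p = \<theta>/2 * ln M" unfolding p_def using M by (simp add: ln_powr)
  ultimately have lnM: "ln M \<le> 2/\<theta> * p" using th by (simp add: field_simps)
  have "ln (12 * M + 1) \<le> ln (16 * M)" using M by simp
  also have "\<dots> = ln 16 + ln M" using M by (simp add: ln_mult)
  also have "ln (16::real) = 4 * ln 2"
  proof -
    have "(16::real) = 2^4" by simp
    then show ?thesis by (metis ln_realpow zero_less_numeral of_nat_numeral)
  qed
  finally have "ln (12 * M + 1) \<le> 4 * ln 2 + ln M" .
  then have "1 + 2 * ln (12 * M + 1) \<le> 9 + 2 * ln M" using ln_2_less_1 by linarith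
  also have "\<dots> \<le> 9 + 4/\<theta> * p" using lnM by simp
  also have "\<dots> \<le> (9 + 4/\<theta>) * p" using p1 th by (simp add: algebra_simps)
  finally have a: "1 + 2 * ln (12 * M + 1) \<le> (9 + 4/\<theta>) * p" .
  have b: "0 \<le> 1 + 2 * ln (12 * M + 1)" using M by simp
  have "Lam (12 * M) \<le> ((9 + 4/\<theta>) * p)^2" unfolding Lam_def using a b by (intro power_mono) auto
  also have "\<dots> = (9 + 4/\<theta>)^2 * M powr \<theta>"
  proof -
    have "p^2 = M powr \<theta>" unfolding p_def using M by (simp add: powr_powr[symmetric] power2_eq_square powr_add[symmetric])
    then show ?thesis by (simp add: power_mult_distrib)
  qed
  finally show ?thesis .
qed


lemma arith1:
  assumes a: "a \<ge> 1" and ab: "a \<le> b"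
  shows "(2*(2*a)+1)^2 + 74 * (2*b) * (2*a) * Lam (2*a) \<le> 2184 * a * b * Lam (12 * b)"
proof -
  have L1: "Lam (2*a) \<ge> 1" using a by (intro Lam_ge1) simp
  have Lm: "Lam (2*a) \<le> Lam (12*b)" using a ab by (intro Lam_mono) auto
  have "(2*(2*a)+1)^2 \<le> (5*a)^2" using a by (intro power_mono) auto
  also have "\<dots> = 25 * a * a" by (simp add: power2_eq_square)
  also have "\<dots> \<le> 25 * a * b" using a ab by (intro mult_left_mono) auto
  also have "\<dots> = 25 * a * b * 1" by simp
  also have "\<dots> \<le> 25 * a * b * Lam (2*a)" using L1 a ab by (intro mult_left_mono) auto
  finally have 1: "(2*(2*a)+1)^2 \<le> 25 * a * b * Lam (2*a)" .
  have 2: "74 * (2*b) * (2*a) * Lam (2*a) = 296 * a * b * Lam (2*a)" by simp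
  have "(2*(2*a)+1)^2 + 74 * (2*b) * (2*a) * Lam (2*a) \<le> 321 * a * b * Lam (2*a)" using 1 2 by linarith
  also have "\<dots> \<le> 321 * a * b * Lam (12*b)" using Lm a ab by (intro mult_left_mono) auto
  also have "\<dots> \<le> 2184 * a * b * Lam (12*b)"
  proof -
    have "0 \<le> a * b * Lam (12*b)" using a ab Lam_ge1[of "12*b"] by simp
    then show ?thesis by linarith
  qed
  finally show ?thesis .
qed

lemma est1:
  assumes N1: "N1 \<ge> 1" and N3: "N3 \<ge> 1"
  shows "real (card {(n1, n2, n3) \<in> Gamma_minus \<mu> n. sim n1 N1 \<and> sim n3 N3})
    \<le> 2184 * N1 * N3 * Lam (12 * max N1 N3)"
proof -
  define G where "G = {(n1, n2, n3) \<in> Gamma_minus \<mu> n. sim n1 N1 \<and> sim n3 N3}"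
  define \<pi> where "\<pi> = (\<lambda>t::pt\<times>pt\<times>pt. (fst t, snd (snd t)))"
  have inj: "inj_on \<pi> G"
  proof (rule inj_onI)
    fix s t assume st: "s \<in> G" "t \<in> G" "\<pi> s = \<pi> t"
    obtain a1 a2 a3 where s: "s = (a1, a2, a3)" by (cases s) auto
    obtain b1 b2 b3 where t: "t = (b1, b2, b3)" by (cases t) auto
    have "a1 = b1" "a3 = b3" using st unfolding s t \<pi>_def by auto
    moreover have m1: "(a1, a2, a3) \<in> Gamma_minus \<mu> n" and m2: "(b1, b2, b3) \<in> Gamma_minus \<mu> n"
      using st unfolding s t G_def by auto
    ultimately have "a2 = b2" using mem_GM(1,2)[OF m1] mem_GM(1,2)[OF m2]
      by (auto simp: prod_eq_iff)
    then show "s = t" using \<open>a1 = b1\<close> \<open>a3 = b3\<close> s t by simp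
  qed
  have facts: "x \<in> bx (0,0) (2*N1) \<and> y \<in> bx (0,0) (2*N3) \<and> x \<noteq> n \<and> y \<noteq> n \<and>
      2*((fst x - fst n)*(fst y - fst n) - (snd x - snd n)*(snd y - snd n)) = \<mu>"
    if xy: "(x, y) \<in> \<pi> ` G" for x y
  proof -
    obtain t where t: "t \<in> G" "\<pi> t = (x, y)" using xy by auto
    obtain a1 a2 a3 where s: "t = (a1, a2, a3)" by (cases t) auto
    have xa: "x = a1" "y = a3" using t unfolding s \<pi>_def by auto
    have g: "(a1, a2, a3) \<in> Gamma_minus \<mu> n" "sim a1 N1" "sim a3 N3" using t unfolding s G_def by auto
    show ?thesis unfolding xa using sim_bx[OF g(2) N1] sim_bx[OF g(3) N3] mem_GM[OF g(1)]
      gm_alg[of "fst a1" "fst a2" "fst a3" "fst n" "snd a1" "snd a2" "snd a3" "snd n" \<mu>] by auto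
  qed
  define k where "k = (\<lambda>y::pt. \<mu> div 2 + (fst y - fst n) * fst n - (snd y - snd n) * snd n)"
  have line: "(fst y - fst n) * fst x - (snd y - snd n) * snd x = k y"
    if "2*((fst x - fst n)*(fst y - fst n) - (snd x - snd n)*(snd y - snd n)) = \<mu>" for x y :: pt
  proof -
    have "(fst x - fst n)*(fst y - fst n) - (snd x - snd n)*(snd y - snd n) = \<mu> div 2"
      using that by (rule half_eq)
    then show ?thesis unfolding k_def by (simp add: algebra_simps)
  qed
  have cardG: "card G = card (\<pi> ` G)" using inj by (simp add: card_image)
  show ?thesis
  proof (cases "N3 \<le> N1")
    case True
    have "real (card (\<pi> ` G)) \<le> (2*(2*N3)+1)^2 + 74 * (2*N1) * (2*N3) * Lam (2*N3)"
    proof (rule L1[where n = n and k = k])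
      show "0 \<le> 2*N1" "1 \<le> 2*N3" using N1 N3 by auto
      fix x y assume "(x, y) \<in> \<pi> ` G"
      then show "x \<in> bx (0,0) (2*N1) \<and> y \<in> bx (0,0) (2*N3) \<and> y \<noteq> n \<and>
          (fst y - fst n) * fst x - (snd y - snd n) * snd x = k y"
        using facts line by blast
    qed
    also have "\<dots> \<le> 2184 * N3 * N1 * Lam (12 * N1)" by (rule arith1[OF N3 True])
    finally show ?thesis unfolding G_def[symmetric] cardG using True by (simp add: max_def mult_ac)
  next
    case False
    have cs: "card (prod.swap ` \<pi> ` G) = card (\<pi> ` G)" by (rule card_image) simp
    have "real (card (prod.swap ` \<pi> ` G)) \<le> (2*(2*N1)+1)^2 + 74 * (2*N3) * (2*N1) * Lam (2*N1)"
    proof (rule L1[where n = n and k = k])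
      show "0 \<le> 2*N3" "1 \<le> 2*N1" using N1 N3 by auto
      fix x y assume "(x, y) \<in> prod.swap ` \<pi> ` G"
      then have "(y, x) \<in> \<pi> ` G" by auto
      then have f: "y \<in> bx (0,0) (2*N1) \<and> x \<in> bx (0,0) (2*N3) \<and> y \<noteq> n \<and> x \<noteq> n \<and>
          2*((fst y - fst n)*(fst x - fst n) - (snd y - snd n)*(snd x - snd n)) = \<mu>" by (rule facts)
      then have "2*((fst x - fst n)*(fst y - fst n) - (snd x - snd n)*(snd y - snd n)) = \<mu>"
        by (simp add: mult.commute)
      then show "x \<in> bx (0,0) (2*N3) \<and> y \<in> bx (0,0) (2*N1) \<and> y \<noteq> n \<and>
          (fst y - fst n) * fst x - (snd y - snd n) * snd x = k y"
        using f line by blast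
    qed
    also have "\<dots> \<le> 2184 * N1 * N3 * Lam (12 * N3)" using False by (intro arith1[OF N1]) auto
    finally show ?thesis unfolding G_def[symmetric] cardG cs[symmetric] using False by (simp add: max_def)
  qed
qed


lemma est2:
  assumes N1: "N1 \<ge> 1" and N2: "N2 \<ge> 1"
  shows "real (card {(n1, n2, n3) \<in> Gamma_minus \<mu> n. sim n1 N1 \<and> sim n2 N2})
    \<le> 2184 * N1 * N2 * Lam (12 * max N1 N2)"
proof -
  define G where "G = {(n1, n2, n3) \<in> Gamma_minus \<mu> n. sim n1 N1 \<and> sim n2 N2}"
  define \<pi> where "\<pi> = (\<lambda>t::pt\<times>pt\<times>pt. (fst t, fst (snd t)))"
  have inj: "inj_on \<pi> G"
  proof (rule inj_onI)
    fix s t assume st: "s \<in> G" "t \<in> G" "\<pi> s = \<pi> t"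
    obtain a1 a2 a3 where s: "s = (a1, a2, a3)" by (cases s) auto
    obtain b1 b2 b3 where t: "t = (b1, b2, b3)" by (cases t) auto
    have "a1 = b1" "a2 = b2" using st unfolding s t \<pi>_def by auto
    moreover have m1: "(a1, a2, a3) \<in> Gamma_minus \<mu> n" and m2: "(b1, b2, b3) \<in> Gamma_minus \<mu> n"
      using st unfolding s t G_def by auto
    ultimately have "a3 = b3" using mem_GM(1,2)[OF m1] mem_GM(1,2)[OF m2]
      by (auto simp: prod_eq_iff)
    then show "s = t" using \<open>a1 = b1\<close> \<open>a2 = b2\<close> s t by simp
  qed
  have facts: "x \<in> bx (0,0) (2*N1) \<and> y \<in> bx (0,0) (2*N2) \<and> x \<noteq> n \<and>
      2*((fst x - fst n)*(fst y - fst x) - (snd x - snd n)*(snd y - snd x)) = \<mu> \<and>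
      hmod2 (fst (2*fst x - fst y, 2*snd x - snd y) - fst n, snd (2*fst x - fst y, 2*snd x - snd y) - snd n)
        = hmod2 (fst y - fst n, snd y - snd n) - 2*\<mu>"
    if xy: "(x, y) \<in> \<pi> ` G" for x y
  proof -
    obtain t where t: "t \<in> G" "\<pi> t = (x, y)" using xy by auto
    obtain a1 a2 a3 where s: "t = (a1, a2, a3)" by (cases t) auto
    have xa: "x = a1" "y = a2" using t unfolding s \<pi>_def by auto
    have g: "(a1, a2, a3) \<in> Gamma_minus \<mu> n" "sim a1 N1" "sim a2 N2" using t unfolding s G_def by auto
    note m = mem_GM[OF g(1)]
    have e1: "2*((fst a1 - fst n)*(fst a3 - fst n) - (snd a1 - snd n)*(snd a3 - snd n)) = \<mu>"
      using m gm_alg[of "fst a1" "fst a2" "fst a3" "fst n" "snd a1" "snd a2" "snd a3" "snd n" \<mu>] by auto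
    have "fst a3 - fst n = fst a2 - fst a1" "snd a3 - snd n = snd a2 - snd a1" using m(1,2) by auto
    then have e2: "2*((fst a1 - fst n)*(fst a2 - fst a1) - (snd a1 - snd n)*(snd a2 - snd a1)) = \<mu>"
      using e1 by simp
    have e3: "(2*fst a1 - fst a2 - fst n)^2 - (2*snd a1 - snd a2 - snd n)^2
        = (fst a2 - fst n)^2 - (snd a2 - snd n)^2 - 2*\<mu>"
      using m gm_alg2[of "fst a1" "fst a2" "fst a3" "fst n" "snd a1" "snd a2" "snd a3" "snd n" \<mu>] by auto
    show ?thesis unfolding xa using sim_bx[OF g(2) N1] sim_bx[OF g(3) N2] m(3) e2 e3
      unfolding hmod2_def by auto
  qed
  have cardG: "card G = card (\<pi> ` G)" using inj by (simp add: card_image)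
  show ?thesis
  proof (cases "N1 \<le> N2")
    case True
    define k where "k = (\<lambda>y::pt. \<mu> div 2 + (fst y - fst n) * fst y - (snd y - snd n) * snd y)"
    have cs: "card (prod.swap ` \<pi> ` G) = card (\<pi> ` G)" by (rule card_image) simp
    have "real (card (prod.swap ` \<pi> ` G)) \<le> (2*(2*N1)+1)^2 + 74 * (2*N2) * (2*N1) * Lam (2*N1)"
    proof (rule L1[where n = n and k = k])
      show "0 \<le> 2*N2" "1 \<le> 2*N1" using N1 N2 by auto
      fix x y assume "(x, y) \<in> prod.swap ` \<pi> ` G"
      then have "(y, x) \<in> \<pi> ` G" by auto
      then have f: "y \<in> bx (0,0) (2*N1) \<and> x \<in> bx (0,0) (2*N2) \<and> y \<noteq> n \<and>
          2*((fst y - fst n)*(fst x - fst y) - (snd y - snd n)*(snd x - snd y)) = \<mu>"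
        using facts by blast
      then have "(fst y - fst n)*(fst x - fst y) - (snd y - snd n)*(snd x - snd y) = \<mu> div 2"
        using half_eq by blast
      then have "(fst y - fst n) * fst x - (snd y - snd n) * snd x = k y"
        unfolding k_def by (simp add: algebra_simps)
      then show "x \<in> bx (0,0) (2*N2) \<and> y \<in> bx (0,0) (2*N1) \<and> y \<noteq> n \<and>
          (fst y - fst n) * fst x - (snd y - snd n) * snd x = k y"
        using f by blast
    qed
    also have "\<dots> \<le> 2184 * N1 * N2 * Lam (12 * N2)" by (rule arith1[OF N1 True])
    finally show ?thesis unfolding G_def[symmetric] cardG cs[symmetric] using True by (simp add: max_def)
  next
    case False
    define RU where "RU = 4*N1 + 2*N2"
    define RV where "RV = 2*N2"
    have RU1: "RU \<ge> 1" and RV1: "RV \<ge> 1" and RVU: "RV \<le> RU" and RU6: "RU \<le> 6*N1"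
      unfolding RU_def RV_def using N1 N2 False by auto
    define f where "f = (\<lambda>u::pt. hmod2 (fst u - fst n, snd u - snd n))"
    define g where "g = (\<lambda>v::pt. hmod2 (fst v - fst n, snd v - snd n) - 2*\<mu>)"
    define \<Phi> where "\<Phi> = (\<lambda>p::pt\<times>pt. ((2*fst (fst p) - fst (snd p), 2*snd (fst p) - snd (snd p)), snd p))"
    have injP: "inj_on \<Phi> (\<pi> ` G)" unfolding \<Phi>_def by (rule inj_onI) (auto simp: prod_eq_iff)
    have sub: "\<Phi> ` \<pi> ` G \<subseteq> {(u, v) \<in> bx (0,0) RU \<times> bx (0,0) RV. f u = g v}"
    proof
      fix q assume "q \<in> \<Phi> ` \<pi> ` G"
      then obtain p where p: "p \<in> \<pi> ` G" "q = \<Phi> p" by (rule imageE) simp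
      obtain x y where "p = (x, y)" by (cases p)
      then have xy: "(x, y) \<in> \<pi> ` G" "q = \<Phi> (x, y)" using p by auto
      note F = facts[OF xy(1)]
      have "(2*fst x - fst y, 2*snd x - snd y) \<in> bx (0,0) RU"
        using F unfolding bx_def RU_def by auto
      moreover have "y \<in> bx (0,0) RV" using F unfolding RV_def by auto
      moreover have "f (2*fst x - fst y, 2*snd x - snd y) = g y" using F unfolding f_def g_def by simp
      ultimately show "q \<in> {(u, v) \<in> bx (0,0) RU \<times> bx (0,0) RV. f u = g v}"
        unfolding xy(2) \<Phi>_def by simp
    qed
    define t where "t = RV / RU"
    have tpos: "t > 0" unfolding t_def using RU1 RV1 by simp
    define LL where "LL = Lam (2*RU)"
    have LLge: "Lam (2*RV) \<le> LL" unfolding LL_def using RV1 RVU by (intro Lam_mono) auto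
    have A: "real (card {(u, u') \<in> bx (0,0) RU \<times> bx (0,0) RU. f u = f u'}) \<le> 182 * RU^2 * LL"
      unfolding f_def LL_def by (rule diag_count[OF RU1])
    have "real (card {(v, v') \<in> bx (0,0) RV \<times> bx (0,0) RV. g v = g v'}) \<le> 182 * RV^2 * Lam (2*RV)"
      unfolding g_def using diag_count[OF RV1, of n] by simp
    also have "\<dots> \<le> 182 * RV^2 * LL" using LLge by (intro mult_left_mono) auto
    finally have B: "real (card {(v, v') \<in> bx (0,0) RV \<times> bx (0,0) RV. g v = g v'}) \<le> 182 * RV^2 * LL" .
    have "card G = card (\<Phi> ` \<pi> ` G)" unfolding cardG using injP by (simp add: card_image)
    also have "\<dots> \<le> card {(u, v) \<in> bx (0,0) RU \<times> bx (0,0) RV. f u = g v}"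
      by (rule card_mono[OF _ sub]) (rule finite_subset[of _ "bx (0,0) RU \<times> bx (0,0) RV"], auto)
    finally have "real (card G) \<le> real (card {(u, v) \<in> bx (0,0) RU \<times> bx (0,0) RV. f u = g v})" by simp
    also have "\<dots> \<le> (t * real (card {(u, u') \<in> bx (0,0) RU \<times> bx (0,0) RU. f u = f u'})
        + real (card {(v, v') \<in> bx (0,0) RV \<times> bx (0,0) RV. g v = g v'}) / t) / 2"
      by (rule cs_pairs[OF _ _ tpos]) simp_all
    also have "\<dots> \<le> (t * (182 * RU^2 * LL) + (182 * RV^2 * LL) / t) / 2"
      using A B tpos by (intro divide_right_mono add_mono mult_left_mono) auto
    also have "\<dots> = 182 * RU * RV * LL"
      unfolding t_def using RU1 RV1 by (simp add: field_simps power2_eq_square)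
    also have "\<dots> \<le> 182 * (6*N1) * (2*N2) * Lam (12 * N1)"
    proof -
      have l1: "LL \<le> Lam (12*N1)" unfolding LL_def using RU1 RU6 by (intro Lam_mono) auto
      have l2: "LL \<ge> 0" unfolding LL_def using RU1 Lam_ge1[of "2*RU"] by simp
      have l3: "RU * RV \<le> (6*N1) * (2*N2)" using RU6 RV1 RU1 unfolding RV_def
        by (intro mult_mono) auto
      have "(RU * RV) * LL \<le> ((6*N1) * (2*N2)) * Lam (12 * N1)"
        by (rule mult_mono[OF l3 l1 _ l2]) (use N1 N2 in simp)
      then show ?thesis by (simp add: mult_ac)
    qed
    also have "\<dots> = 2184 * N1 * N2 * Lam (12 * N1)" by simp
    finally show ?thesis unfolding G_def using False by (simp add: max_def)
  qed
qed


lemma final_bound: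
  assumes a: "a \<ge> 1" and b: "b \<ge> 1" and th: "\<theta> > 0"
    and c: "x \<le> 2184 * a * b * Lam (12 * max a b)"
  shows "x \<le> (2184 * (9 + 4/\<theta>)^2) * a * b * max a b powr \<theta>"
proof -
  have "Lam (12 * max a b) \<le> (9 + 4/\<theta>)^2 * max a b powr \<theta>"
    using a th by (intro Lam_bound) auto
  then have "2184 * a * b * Lam (12 * max a b) \<le> 2184 * a * b * ((9 + 4/\<theta>)^2 * max a b powr \<theta>)"
    using a b by (intro mult_left_mono) auto
  then show ?thesis using c by (simp add: mult_ac)
qed

theorem lemma2p1:
  fixes \<theta> :: real
  assumes "\<theta> > 0"
  shows "\<exists>C > 0. \<forall>(n::pt) (\<mu>::int) (N1::real) (N2::real) (N3::real).
     dyadic N1 \<longrightarrow> dyadic N2 \<longrightarrow> dyadic N3 \<longrightarrow>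
       real (card {(n1, n2, n3) \<in> Gamma_minus \<mu> n. sim n1 N1 \<and> sim n3 N3})
          \<le> C * N1 * N3 * max N1 N3 powr \<theta>
     \<and> real (card {(n1, n2, n3) \<in> Gamma_minus \<mu> n. sim n1 N1 \<and> sim n2 N2})
          \<le> C * N1 * N2 * max N1 N2 powr \<theta>"
proof (intro exI[of _ "2184 * (9 + 4/\<theta>)^2"] conjI allI impI)
  have "0 < 9 + 4/\<theta>" using assms by (simp add: add_pos_pos)
  then show "0 < 2184 * (9 + 4/\<theta>)^2" by simp
  fix n :: pt and \<mu> :: int and N1 N2 N3 :: real
  assume d: "dyadic N1" "dyadic N2" "dyadic N3"
  note N = dyadic_ge1[OF d(1)] dyadic_ge1[OF d(2)] dyadic_ge1[OF d(3)]
  show "real (card {(n1, n2, n3) \<in> Gamma_minus \<mu> n. sim n1 N1 \<and> sim n3 N3})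
          \<le> 2184 * (9 + 4/\<theta>)^2 * N1 * N3 * max N1 N3 powr \<theta>"
    by (rule final_bound[OF N(1) N(3) assms est1[OF N(1) N(3)]])
  show "real (card {(n1, n2, n3) \<in> Gamma_minus \<mu> n. sim n1 N1 \<and> sim n2 N2})
          \<le> 2184 * (9 + 4/\<theta>)^2 * N1 * N2 * max N1 N2 powr \<theta>"
    by (rule final_bound[OF N(1) N(2) assms est2[OF N(1) N(2)]])
qed

end
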